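(* Let $X$ be a compact Hausdorff space and $\phi_1,\dots,\phi_m$ real-valued continuous functions on $X$. Let $\mathcal C(X,1,\boldsymbol\phi)$ be the set of positive scalar Borel measures $\mu$ on $X$ with $\mu(X)=1$ and $\int_X\phi_i\,d\mu=0$ for $i=1,\dots,m$. Suppose $\mu=\sum_{j=1}^n w_j\delta_{x_j}$ where $1\le n\le m+1$, $x_1,\dots,x_n$ are distinct points of $X$, and the real numbers $w_j$ satisfy $w_j>0$, $\sum_{j=1}^nw_j=1$, and $\sum_{j=1}^n\phi_i(x_j)w_j=0$ for $i=1,\dots,m$. Write $\boldsymbol\phi(x_j)=(\phi_1(x_j),\dots,\phi_m(x_j))^{T}\in\mathbb{R}^m$. Then $\mu$ is an extreme point of $\mathcal C(X,1,\boldsymbol\phi)$ if and only if $0=\sum_{j=1}^nw_j\boldsymbol\phi(x_j)$ is an interior point of the convex hull of $\{\boldsymbol\phi(x_1),\dots,\boldsymbol\phi(x_n)\}$ in $\mathbb{R}^m$.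
   Context: $\delta_x$ denotes the unit point-mass at $x$. A vector $v$ is an interior point of the convex hull of $\{u_1,\dots,u_n\}\subset\mathbb R^m$ if $v=\sum_j\lambda_ju_j$ with $\lambda_j>0$, $\sum_j\lambda_j=1$, and the coefficients $\lambda_1,\dots,\lambda_n$ are uniquely determined by these conditions. *)

theory Defs
  imports "HOL-Analysis.Analysis" "HOL-Probability.Probability"
begin

definition moment_set :: "nat \<Rightarrow> (nat \<Rightarrow> 'a::topological_space \<Rightarrow> real) \<Rightarrow> 'a measure set" where
  "moment_set m \<phi> = {M. sets M = sets borel \<and> emeasure M (space M) = 1 \<and>
      (\<forall>i<m. integrable M (\<phi> i) \<and> integral\<^sup>L M (\<phi> i) = 0)}"

definition extreme_measure :: "'a measure set \<Rightarrow> 'a measure \<Rightarrow> bool" where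
  "extreme_measure C \<mu> \<longleftrightarrow> \<mu> \<in> C \<and>
     (\<forall>\<nu>1\<in>C. \<forall>\<nu>2\<in>C. \<forall>t::real. 0 < t \<and> t < 1 \<and>
        (\<forall>A\<in>sets \<mu>. emeasure \<mu> A = ennreal t * emeasure \<nu>1 A + ennreal (1 - t) * emeasure \<nu>2 A)
        \<longrightarrow> \<nu>1 = \<mu> \<and> \<nu>2 = \<mu>)"

definition dirac_comb :: "nat \<Rightarrow> (nat \<Rightarrow> real) \<Rightarrow> (nat \<Rightarrow> 'a::topological_space) \<Rightarrow> 'a measure" where
  "dirac_comb n w x = measure_of UNIV (sets borel)
      (\<lambda>A. \<Sum>j<n. ennreal (w j) * indicator A (x j))"

text \<open>v (in R^m, coordinates i<m) is an interior point of the convex hull of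
  u_0,...,u_{n-1}: v = sum lambda_j u_j with lambda_j > 0, sum lambda_j = 1, and the
  coefficients are uniquely determined by these conditions.\<close>
definition conv_coeffs :: "nat \<Rightarrow> nat \<Rightarrow> (nat \<Rightarrow> nat \<Rightarrow> real) \<Rightarrow> (nat \<Rightarrow> real) \<Rightarrow> (nat \<Rightarrow> real) \<Rightarrow> bool" where
  "conv_coeffs m n u v l \<longleftrightarrow> (\<forall>j<n. l j > 0) \<and> (\<Sum>j<n. l j) = 1 \<and>
     (\<forall>i<m. v i = (\<Sum>j<n. l j * u j i))"

definition interior_conv_point :: "nat \<Rightarrow> nat \<Rightarrow> (nat \<Rightarrow> nat \<Rightarrow> real) \<Rightarrow> (nat \<Rightarrow> real) \<Rightarrow> bool" where
  "interior_conv_point m n u v \<longleftrightarrow> (\<exists>l. conv_coeffs m n u v l) \<and>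
     (\<forall>l l'. conv_coeffs m n u v l \<and> conv_coeffs m n u v l' \<longrightarrow> (\<forall>j<n. l j = l' j))"

end

theory Submission
  imports Defs
begin


lemma dc_sets[simp]: "sets (dirac_comb n w x) = sets borel"
  unfolding dirac_comb_def by (metis sets.sigma_sets_eq sets_measure_of space_borel sets.space_closed)

lemma dc_space[simp]: "space (dirac_comb n w x) = UNIV"
  using sets_eq_imp_space_eq[OF dc_sets] by simp

lemma dc_emeasure:
  assumes "A \<in> sets borel"
  shows "emeasure (dirac_comb n w x) A = (\<Sum>j<n. ennreal (w j) * indicator A (x j))"
  unfolding dirac_comb_def
proof (rule emeasure_measure_of_sigma)
  show "sigma_algebra UNIV (sets borel)"
    by (metis sets.sigma_algebra_axioms space_borel)
  show "positive (sets borel) (\<lambda>A. \<Sum>j<n. ennreal (w j) * indicator A (x j))"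
    by (simp add: positive_def)
  show "countably_additive (sets borel) (\<lambda>A. \<Sum>j<n. ennreal (w j) * indicator A (x j))"
  proof (unfold countably_additive_def, intro allI impI)
    fix F :: "nat \<Rightarrow> 'a set" assume "range F \<subseteq> sets borel" and d: "disjoint_family F"
    have "(\<Sum>i. \<Sum>j<n. ennreal (w j) * indicator (F i) (x j)) =
          (\<Sum>j<n. \<Sum>i. ennreal (w j) * indicator (F i) (x j))"
      by (rule suminf_sum) (rule summableI)
    also have "\<dots> = (\<Sum>j<n. ennreal (w j) * indicator (\<Union>i. F i) (x j))"
      using suminf_indicator[OF d] by simp
    finally show "(\<Sum>i. \<Sum>j<n. ennreal (w j) * indicator (F i) (x j)) =
          (\<Sum>j<n. ennreal (w j) * indicator (\<Union>i. F i) (x j))" .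
  qed
  show "A \<in> sets borel" by fact
qed



lemma sum_ind_inj:
  fixes n :: nat
  assumes "inj_on x {..<n}" "k < n"
  shows "(\<Sum>j<n. c j * indicator {x j} (x k)) = (c k :: 'b::{comm_semiring_1})"
    and "(\<Sum>j<n. c j * indicator {x k} (x j)) = (c k :: 'b::{comm_semiring_1})"
proof -
  have e: "x j = x k \<longleftrightarrow> j = k" "x k = x j \<longleftrightarrow> j = k" if "j < n" for j
    using assms that by (auto simp: inj_on_def)
  have "(\<Sum>j<n. c j * indicator {x j} (x k)) = (\<Sum>j<n. if j = k then c j else 0)"
    by (intro sum.cong refl) (simp add: indicator_def e)
  also have "\<dots> = c k" using assms by (subst sum.delta) auto
  finally show "(\<Sum>j<n. c j * indicator {x j} (x k)) = c k" .
  have "(\<Sum>j<n. c j * indicator {x k} (x j)) = (\<Sum>j<n. if j = k then c j else 0)"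
    by (intro sum.cong refl) (simp add: indicator_def e)
  also have "\<dots> = c k" using assms by (subst sum.delta) auto
  finally show "(\<Sum>j<n. c j * indicator {x k} (x j)) = c k" .
qed

lemma compl_fin_borel: "UNIV - x`{..<n::nat} \<in> sets (borel :: 'a::t1_space measure)"
  by (intro borel_open open_Diff open_UNIV finite_imp_closed finite_imageI finite_lessThan)

lemma fin_borel: "x`{..<n::nat} \<in> sets (borel :: 'a::t1_space measure)"
  by (intro borel_closed finite_imp_closed finite_imageI finite_lessThan)

lemma conc_emeasure:
  fixes M :: "'a::t1_space measure" and n :: nat
  assumes sM: "sets M = sets borel" and fin: "emeasure M UNIV \<noteq> \<infinity>"
    and null: "emeasure M (UNIV - x`{..<n}) = 0" and inj: "inj_on x {..<n}"
    and A: "A \<in> sets borel"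
  shows "emeasure M A = (\<Sum>j<n. ennreal (measure M {x j}) * indicator A (x j))"
proof -
  have spM: "space M = UNIV" using sets_eq_imp_space_eq[OF sM] by simp
  interpret finite_measure M using fin spM by (intro finite_measureI) simp
  have sing: "{y} \<in> sets M" for y using sM by simp
  have F: "x`{..<n} \<in> sets M" using fin_borel[of x n] sM by simp
  have A': "A \<in> sets M" using A sM by simp
  have AS: "A \<inter> x`{..<n} \<in> sets M" by (rule sets.Int[OF A' F])
  have AS': "A - x`{..<n} \<in> sets M" by (rule sets.Diff[OF A' F])
  have e1: "emeasure M A = emeasure M (A \<inter> x`{..<n}) + emeasure M (A - x`{..<n})"
    by (rule plus_emeasure[symmetric, OF AS AS', simplified Int_Diff_Un]) auto
  have e2: "emeasure M (A - x`{..<n}) = 0"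
  proof (rule emeasure_eq_0[OF _ null])
    show "UNIV - x`{..<n} \<in> sets M" using compl_fin_borel[of x n] sM by simp
  qed blast
  have e3: "A \<inter> x`{..<n} = (\<Union>j\<in>{..<n}. A \<inter> {x j})" by blast
  have e4: "emeasure M (\<Union>j\<in>{..<n}. A \<inter> {x j}) = (\<Sum>j<n. emeasure M (A \<inter> {x j}))"
  proof (rule sum_emeasure[symmetric])
    show "(\<lambda>j. A \<inter> {x j}) ` {..<n} \<subseteq> sets M"
    proof (rule image_subsetI)
      fix j show "A \<inter> {x j} \<in> sets M" by (rule sets.Int[OF A' sing])
    qed
    show "disjoint_family_on (\<lambda>j. A \<inter> {x j}) {..<n}"
      unfolding disjoint_family_on_def
    proof (intro ballI impI)
      fix i j assume ij: "i \<in> {..<n}" "j \<in> {..<n}" "i \<noteq> j"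
      have "x i \<noteq> x j" by (rule inj_on_contraD[OF inj ij(3) ij(1) ij(2)])
      then show "A \<inter> {x i} \<inter> (A \<inter> {x j}) = {}" by auto
    qed
  qed (rule finite_lessThan)
  have e5: "(\<Sum>j<n. emeasure M (A \<inter> {x j})) = (\<Sum>j<n. ennreal (measure M {x j}) * indicator A (x j))"
    by (intro sum.cong refl) (simp add: indicator_def emeasure_eq_measure)
  show ?thesis unfolding e1 e2 e3 e4 e5 by simp
qed

lemma conc_integral:
  fixes M :: "'a::t1_space measure" and n :: nat and f :: "'a \<Rightarrow> real"
  assumes sM: "sets M = sets borel" and fin: "emeasure M UNIV \<noteq> \<infinity>"
    and null: "emeasure M (UNIV - x`{..<n}) = 0" and inj: "inj_on x {..<n}"
    and f: "f \<in> borel_measurable borel"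
  shows "integrable M f \<and> integral\<^sup>L M f = (\<Sum>j<n. measure M {x j} * f (x j))"
proof -
  have spM: "space M = UNIV" using sets_eq_imp_space_eq[OF sM] by simp
  interpret finite_measure M using fin spM by (intro finite_measureI) simp
  let ?g = "\<lambda>y. \<Sum>j<n. f (x j) * indicator {x j} y"
  have fM: "f \<in> borel_measurable M" using f measurable_cong_sets[OF sM refl] by blast
  have ii: "integrable M (indicator {x j} :: _ \<Rightarrow> real)" for j
    by (rule integrable_real_indicator) (auto simp: sM less_top[symmetric])
  have gi: "integrable M ?g"
    apply (rule Bochner_Integration.integrable_sum)
    apply (rule integrable_mult_right)
    apply (rule ii)
    done
  have gM: "?g \<in> borel_measurable M" using gi by (rule borel_measurable_integrable)
  have ae: "AE y in M. ?g y = f y"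
  proof (rule AE_I'[of "UNIV - x`{..<n}"])
    show "UNIV - x ` {..<n} \<in> null_sets M" using null sM compl_fin_borel
      by (auto simp: null_sets_def)
    show "{y \<in> space M. \<not> ?g y = f y} \<subseteq> UNIV - x ` {..<n}"
    proof (intro subsetI DiffI UNIV_I notI)
      fix y assume y: "y \<in> {y \<in> space M. \<not> ?g y = f y}" and "y \<in> x ` {..<n}"
      then obtain k where k: "k < n" "y = x k" by auto
      have "?g (x k) = f (x k)" by (rule sum_ind_inj(1)[OF inj k(1)])
      then show False using y k by simp
    qed
  qed
  have i1: "integrable M f" using integrable_cong_AE_imp[OF gi fM ae] .
  have e1: "integral\<^sup>L M f = integral\<^sup>L M ?g"
    using integral_cong_AE[OF gM fM ae] by simp
  have e2: "integral\<^sup>L M ?g = (\<Sum>j<n. f (x j) * measure M {x j})"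
  proof -
    have "integral\<^sup>L M ?g = (\<Sum>j<n. integral\<^sup>L M (\<lambda>y. f (x j) * indicator {x j} y))"
      apply (rule Bochner_Integration.integral_sum)
      apply (rule integrable_mult_right)
      apply (rule ii)
      done
    also have "\<dots> = (\<Sum>j<n. f (x j) * measure M {x j})"
      by (intro sum.cong refl) (simp only: integral_mult_right_zero Bochner_Integration.integral_indicator spM Int_UNIV_right)
    finally show ?thesis .
  qed
  have e3: "(\<Sum>j<n. f (x j) * measure M {x j}) = (\<Sum>j<n. measure M {x j} * f (x j))"
    by (simp only: mult.commute)
  have e: "integral\<^sup>L M f = (\<Sum>j<n. measure M {x j} * f (x j))"
    using trans[OF trans[OF e1 e2] e3] .
  show ?thesis using i1 e by (rule conjI)
qed

lemma dc_point:
  fixes n :: nat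
  assumes inj: "inj_on x {..<n}" and k: "k < n" and w: "\<And>j. j < n \<Longrightarrow> w j \<ge> 0"
  shows "measure (dirac_comb n w x) {x k :: 'a::t1_space} = w k"
proof -
  have "emeasure (dirac_comb n w x) {x k} = ennreal (w k)"
    by (simp only: dc_emeasure[of "{x k}", OF borel_closed[OF closed_singleton]] sum_ind_inj(2)[OF inj k])
  then show ?thesis using w k by (simp add: measure_def)
qed

lemma dc_univ: "emeasure (dirac_comb n w x) UNIV = (\<Sum>j<n. ennreal (w j))"
  by (simp add: dc_emeasure)

lemma dc_null:
  "emeasure (dirac_comb n w x) (UNIV - x`{..<n}) = (0::ennreal)"
  for x :: "nat \<Rightarrow> 'a::t1_space"
  by (subst dc_emeasure[OF compl_fin_borel]) auto



lemma dc_in_C: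
  fixes \<phi> :: "nat \<Rightarrow> 'a::t1_space \<Rightarrow> real" and n :: nat
  assumes cont: "\<And>i. i < m \<Longrightarrow> continuous_on UNIV (\<phi> i)"
    and inj: "inj_on x {..<n}"
    and pos: "\<And>j. j < n \<Longrightarrow> l j \<ge> 0" and s1: "(\<Sum>j<n. l j) = 1"
    and mom: "\<And>i. i < m \<Longrightarrow> (\<Sum>j<n. l j * \<phi> i (x j)) = 0"
  shows "dirac_comb n l x \<in> moment_set m \<phi>"
proof -
  let ?M = "dirac_comb n l x"
  have "(\<Sum>j<n. ennreal (l j)) = ennreal (\<Sum>j<n. l j)" by (rule sum_ennreal) (simp add: pos)
  then have u: "emeasure ?M UNIV = 1"
    using s1 by (simp add: dc_univ)
  have "integrable ?M (\<phi> i) \<and> integral\<^sup>L ?M (\<phi> i) = 0" if i: "i < m" for i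
  proof -
    have *: "integrable ?M (\<phi> i) \<and> integral\<^sup>L ?M (\<phi> i) = (\<Sum>j<n. measure ?M {x j} * \<phi> i (x j))"
      by (rule conc_integral[OF dc_sets _ dc_null inj borel_measurable_continuous_onI[OF cont[OF i]]])
         (simp add: u)
    have "(\<Sum>j<n. measure ?M {x j} * \<phi> i (x j)) = (\<Sum>j<n. l j * \<phi> i (x j))"
      by (intro sum.cong refl) (simp add: dc_point[OF inj _ pos])
    then show ?thesis using * mom[OF i] by simp
  qed
  then show ?thesis unfolding moment_set_def using u by simp
qed

lemma key:
  fixes \<phi> :: "nat \<Rightarrow> 'a::t1_space \<Rightarrow> real" and n :: nat
  assumes cont: "\<And>i. i < m \<Longrightarrow> continuous_on UNIV (\<phi> i)"
    and inj: "inj_on x {..<n}"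
    and wpos: "\<And>j. j < n \<Longrightarrow> w j > 0"
    and uniq: "\<And>l. conv_coeffs m n (\<lambda>j i. \<phi> i (x j)) (\<lambda>i. 0) l \<Longrightarrow> (\<forall>j<n. l j = w j)"
    and wc: "conv_coeffs m n (\<lambda>j i. \<phi> i (x j)) (\<lambda>i. 0) w"
    and nu: "\<nu> \<in> moment_set m \<phi>" and c: "c > 0"
    and le: "\<And>A. A \<in> sets borel \<Longrightarrow> ennreal c * emeasure \<nu> A \<le> emeasure (dirac_comb n w x) A"
  shows "\<nu> = dirac_comb n w x"
proof -
  have sN: "sets \<nu> = sets borel" and u: "emeasure \<nu> (space \<nu>) = 1"
    and int: "\<And>i. i < m \<Longrightarrow> integrable \<nu> (\<phi> i) \<and> integral\<^sup>L \<nu> (\<phi> i) = 0"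
    using nu unfolding moment_set_def by auto
  have spN: "space \<nu> = UNIV" using sets_eq_imp_space_eq[OF sN] by simp
  have fin: "emeasure \<nu> UNIV \<noteq> \<infinity>" using u spN by simp
  have "ennreal c * emeasure \<nu> (UNIV - x`{..<n}) \<le> 0"
    using le[OF compl_fin_borel[of x n]] dc_null[of n w x] by simp
  then have null: "emeasure \<nu> (UNIV - x`{..<n}) = 0" using c by simp
  define a where "a j = measure \<nu> {x j}" for j
  have apos: "a j \<ge> 0" for j unfolding a_def by simp
  have em: "emeasure \<nu> A = (\<Sum>j<n. ennreal (a j) * indicator A (x j))" if "A \<in> sets borel" for A
    unfolding a_def by (rule conc_emeasure[OF sN fin null inj that])
  have "1 = (\<Sum>j<n. ennreal (a j))" using em[of UNIV] u spN by simp
  also have "\<dots> = ennreal (\<Sum>j<n. a j)" using apos by simp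
  finally have asum: "(\<Sum>j<n. a j) = 1" by simp
  have amom: "(\<Sum>j<n. a j * \<phi> i (x j)) = 0" if i: "i < m" for i
    using conc_integral[OF sN fin null inj borel_measurable_continuous_onI[OF cont[OF i]]] int[OF i]
    unfolding a_def by simp
  have wsum: "(\<Sum>j<n. w j) = 1" and wmom: "\<And>i. i < m \<Longrightarrow> (\<Sum>j<n. w j * \<phi> i (x j)) = 0"
    using wc unfolding conv_coeffs_def by auto
  have "conv_coeffs m n (\<lambda>j i. \<phi> i (x j)) (\<lambda>i. 0) (\<lambda>j. (w j + a j) / 2)"
    unfolding conv_coeffs_def
  proof (intro conjI allI impI)
    fix j assume "j < n" then show "(w j + a j) / 2 > 0" using wpos[of j] apos[of j] by simp
  next
    show "(\<Sum>j<n. (w j + a j) / 2) = 1"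
      using wsum asum by (simp only: sum_divide_distrib[symmetric] sum.distrib) simp
  next
    fix i assume i: "i < m"
    have "(\<Sum>j<n. (w j + a j) / 2 * \<phi> i (x j)) =
          ((\<Sum>j<n. w j * \<phi> i (x j)) + (\<Sum>j<n. a j * \<phi> i (x j))) / 2"
    proof -
      have "(\<Sum>j<n. (w j + a j) / 2 * \<phi> i (x j)) =
            (\<Sum>j<n. w j * \<phi> i (x j) / 2 + a j * \<phi> i (x j) / 2)"
        by (intro sum.cong refl) (simp add: field_simps)
      also have "\<dots> = (\<Sum>j<n. w j * \<phi> i (x j)) / 2 + (\<Sum>j<n. a j * \<phi> i (x j)) / 2"
        by (simp only: sum.distrib sum_divide_distrib)
      finally show ?thesis by simp
    qed
    then show "0 = (\<Sum>j<n. (w j + a j) / 2 * \<phi> i (x j))" using wmom[OF i] amom[OF i] by simp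
  qed
  from uniq[OF this] have aw: "\<And>j. j < n \<Longrightarrow> a j = w j" by simp
  show ?thesis
  proof (rule measure_eqI)
    show "sets \<nu> = sets (dirac_comb n w x)" using sN by simp
    fix A assume "A \<in> sets \<nu>"
    then have A: "A \<in> sets borel" using sN by simp
    show "emeasure \<nu> A = emeasure (dirac_comb n w x) A"
      unfolding em[OF A] dc_emeasure[OF A] by (intro sum.cong refl) (simp add: aw)
  qed
qed

theorem theorem3p3:
  fixes \<phi> :: "nat \<Rightarrow> 'a::t2_space \<Rightarrow> real"
    and m n :: nat and x :: "nat \<Rightarrow> 'a" and w :: "nat \<Rightarrow> real"
  assumes "compact (UNIV :: 'a set)"
    and "\<And>i. i < m \<Longrightarrow> continuous_on UNIV (\<phi> i)"
    and "1 \<le> n" and "n \<le> m + 1"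
    and "inj_on x {..<n}"
    and "\<And>j. j < n \<Longrightarrow> w j > 0"
    and "(\<Sum>j<n. w j) = 1"
    and "\<And>i. i < m \<Longrightarrow> (\<Sum>j<n. \<phi> i (x j) * w j) = 0"
  shows "extreme_measure (moment_set m \<phi>) (dirac_comb n w x) \<longleftrightarrow>
         interior_conv_point m n (\<lambda>j i. \<phi> i (x j)) (\<lambda>i. 0)"
proof -
  note cont = assms(2) and inj = assms(5) and wpos = assms(6) and wsum = assms(7)
  have wmom: "(\<Sum>j<n. w j * \<phi> i (x j)) = 0" if "i < m" for i
    using assms(8)[OF that] by (simp add: mult.commute)
  have wc: "conv_coeffs m n (\<lambda>j i. \<phi> i (x j)) (\<lambda>i. 0) w"
    unfolding conv_coeffs_def using wpos wsum wmom by auto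
  have muC: "dirac_comb n w x \<in> moment_set m \<phi>"
    by (rule dc_in_C[OF cont inj _ wsum wmom]) (auto intro: less_imp_le wpos)
  show ?thesis
  proof
    assume ext: "extreme_measure (moment_set m \<phi>) (dirac_comb n w x)"
    have claim: "l j = w j" if lc: "conv_coeffs m n (\<lambda>j i. \<phi> i (x j)) (\<lambda>i. 0) l" and j: "j < n" for l j
    proof (rule ccontr)
      assume ne: "l j \<noteq> w j"
      have lpos: "\<And>j. j < n \<Longrightarrow> l j > 0" and lsum: "(\<Sum>j<n. l j) = 1"
        and lmom: "\<And>i. i < m \<Longrightarrow> (\<Sum>j<n. l j * \<phi> i (x j)) = 0"
        using lc unfolding conv_coeffs_def by auto
      define q where "q j = w j / (w j + l j)" for j
      define t where "t = Min (q ` {..<n})"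
      have "0 \<in> {..<n}" using assms(3) by simp
      then have nonempty: "q ` {..<n} \<noteq> {}" by blast
      have tle: "t \<le> q k" if "k < n" for k unfolding t_def using that by (intro Min_le) auto
      have "t \<in> q ` {..<n}" unfolding t_def using nonempty by (intro Min_in) auto
      then obtain k0 where k0: "k0 < n" "t = q k0" by auto
      have wk0: "w k0 > 0" and lk0: "l k0 > 0" using k0 wpos lpos by auto
      have t0: "0 < t" unfolding k0(2) q_def using wk0 lk0 by simp
      have t1: "t < 1" unfolding k0(2) q_def using wk0 lk0 by (simp add: divide_less_eq)
      have wtl: "w k - t * l k > 0" if k: "k < n" for k
      proof -
        have "t * (w k + l k) \<le> w k"
          using tle[OF k] wpos[OF k] lpos[OF k] by (simp add: q_def field_simps)
        then have "w k - t * l k \<ge> t * w k" by (simp add: algebra_simps)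
        moreover have "t * w k > 0" using t0 wpos[OF k] by simp
        ultimately show ?thesis by linarith
      qed
      define l2 where "l2 k = (w k - t * l k) / (1 - t)" for k
      have l2pos: "l2 k > 0" if "k < n" for k unfolding l2_def using wtl[OF that] t1 by simp
      have l2sum: "(\<Sum>k<n. l2 k) = 1"
      proof -
        have "(\<Sum>k<n. l2 k) = (\<Sum>k<n. w k - t * l k) / (1 - t)"
          unfolding l2_def by (rule sum_divide_distrib[symmetric])
        also have "(\<Sum>k<n. w k - t * l k) = (\<Sum>k<n. w k) - t * (\<Sum>k<n. l k)"
          by (simp only: sum_subtractf sum_distrib_left)
        finally show ?thesis using wsum lsum t1 by simp
      qed
      have l2mom: "(\<Sum>k<n. l2 k * \<phi> i (x k)) = 0" if i: "i < m" for i
      proof -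
        have "(\<Sum>k<n. l2 k * \<phi> i (x k)) = (\<Sum>k<n. (w k * \<phi> i (x k) - t * (l k * \<phi> i (x k))) / (1 - t))"
          unfolding l2_def by (intro sum.cong refl) (simp add: left_diff_distrib mult.assoc)
        also have "\<dots> = (\<Sum>k<n. w k * \<phi> i (x k) - t * (l k * \<phi> i (x k))) / (1 - t)"
          by (rule sum_divide_distrib[symmetric])
        also have "(\<Sum>k<n. w k * \<phi> i (x k) - t * (l k * \<phi> i (x k))) =
            (\<Sum>k<n. w k * \<phi> i (x k)) - t * (\<Sum>k<n. l k * \<phi> i (x k))"
          by (simp only: sum_subtractf sum_distrib_left)
        finally show ?thesis using wmom[OF i] lmom[OF i] by simp
      qed
      have n1C: "dirac_comb n l x \<in> moment_set m \<phi>"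
        by (rule dc_in_C[OF cont inj _ lsum lmom]) (auto intro: less_imp_le lpos)
      have n2C: "dirac_comb n l2 x \<in> moment_set m \<phi>"
        by (rule dc_in_C[OF cont inj _ l2sum l2mom]) (auto intro: less_imp_le l2pos)
      have comb: "emeasure (dirac_comb n w x) A =
          ennreal t * emeasure (dirac_comb n l x) A + ennreal (1 - t) * emeasure (dirac_comb n l2 x) A"
        if A: "A \<in> sets (dirac_comb n w x)" for A
      proof -
        have Ab: "A \<in> sets borel" using A by simp
        have pt: "ennreal (w k) * indicator A (x k) =
            ennreal t * (ennreal (l k) * indicator A (x k)) + ennreal (1 - t) * (ennreal (l2 k) * indicator A (x k))"
          if k: "k < n" for k
        proof -
          have wk: "w k = t * l k + (1 - t) * l2 k" unfolding l2_def using t1 by simp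
          have p1: "0 \<le> t * l k" using t0 lpos[OF k] by simp
          have p2: "0 \<le> (1 - t) * l2 k" using t1 l2pos[OF k] by simp
          have "ennreal (w k) = ennreal (t * l k) + ennreal ((1 - t) * l2 k)"
            unfolding wk by (rule ennreal_plus[OF p1 p2])
          also have "ennreal (t * l k) = ennreal t * ennreal (l k)"
            using t0 lpos[OF k] by (intro ennreal_mult) auto
          also have "ennreal ((1 - t) * l2 k) = ennreal (1 - t) * ennreal (l2 k)"
            using t1 l2pos[OF k] by (intro ennreal_mult) auto
          finally have eq: "ennreal (w k) = ennreal t * ennreal (l k) + ennreal (1 - t) * ennreal (l2 k)" .
          show ?thesis by (simp only: eq distrib_right mult.assoc)
        qed
        show ?thesis
          unfolding dc_emeasure[OF Ab] sum_distrib_left sum.distrib[symmetric]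
          by (intro sum.cong refl) (simp add: pt)
      qed
      have E: "\<And>\<nu>1 \<nu>2 t. \<nu>1 \<in> moment_set m \<phi> \<Longrightarrow> \<nu>2 \<in> moment_set m \<phi> \<Longrightarrow> 0 < t \<Longrightarrow> t < 1 \<Longrightarrow>
          (\<forall>A\<in>sets (dirac_comb n w x). emeasure (dirac_comb n w x) A = ennreal t * emeasure \<nu>1 A + ennreal (1 - t) * emeasure \<nu>2 A)
          \<Longrightarrow> \<nu>1 = dirac_comb n w x \<and> \<nu>2 = dirac_comb n w x"
        using ext unfolding extreme_measure_def by blast
      have "dirac_comb n l x = dirac_comb n w x"
        using E[OF n1C n2C t0 t1] comb by blast
      then have "measure (dirac_comb n l x) {x j} = measure (dirac_comb n w x) {x j}" by simp
      then have "l j = w j"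
      proof -
        have pl: "measure (dirac_comb n l x) {x j} = l j"
          by (rule dc_point[OF inj j]) (simp add: less_imp_le lpos)
        have pw: "measure (dirac_comb n w x) {x j} = w j"
          by (rule dc_point[OF inj j]) (simp add: less_imp_le wpos)
        show ?thesis using \<open>measure (dirac_comb n l x) {x j} = measure (dirac_comb n w x) {x j}\<close>
          unfolding pl pw .
      qed
      with ne show False by simp
    qed
    show "interior_conv_point m n (\<lambda>j i. \<phi> i (x j)) (\<lambda>i. 0)"
      unfolding interior_conv_point_def
    proof (intro conjI allI impI)
      show "\<exists>l. conv_coeffs m n (\<lambda>j i. \<phi> i (x j)) (\<lambda>i. 0) l" using wc by blast
    next
      fix l l' j
      assume ll: "conv_coeffs m n (\<lambda>j i. \<phi> i (x j)) (\<lambda>i. 0) l \<and> conv_coeffs m n (\<lambda>j i. \<phi> i (x j)) (\<lambda>i. 0) l'"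
        and j: "j < n"
      have "l j = w j" using claim[OF conjunct1[OF ll] j] .
      moreover have "l' j = w j" using claim[OF conjunct2[OF ll] j] .
      ultimately show "l j = l' j" by simp
    qed
  next
    assume int: "interior_conv_point m n (\<lambda>j i. \<phi> i (x j)) (\<lambda>i. 0)"
    have U: "\<forall>l l'. conv_coeffs m n (\<lambda>j i. \<phi> i (x j)) (\<lambda>i. 0) l \<and> conv_coeffs m n (\<lambda>j i. \<phi> i (x j)) (\<lambda>i. 0) l' \<longrightarrow> (\<forall>j<n. l j = l' j)"
      using int unfolding interior_conv_point_def by (rule conjunct2)
    have uniq: "\<forall>j<n. l j = w j" if "conv_coeffs m n (\<lambda>j i. \<phi> i (x j)) (\<lambda>i. 0) l" for l
      using U that wc by blast
    show "extreme_measure (moment_set m \<phi>) (dirac_comb n w x)"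
      unfolding extreme_measure_def
    proof (intro conjI muC ballI allI impI)
      fix \<nu>1 \<nu>2 t
      assume n1: "\<nu>1 \<in> moment_set m \<phi>" and n2: "\<nu>2 \<in> moment_set m \<phi>"
        and H: "0 < t \<and> t < 1 \<and> (\<forall>A\<in>sets (dirac_comb n w x). emeasure (dirac_comb n w x) A =
             ennreal t * emeasure \<nu>1 A + ennreal (1 - t) * emeasure \<nu>2 A)"
      then have t0: "0 < t" and t1: "t < 1"
        and eq: "\<And>A. A \<in> sets borel \<Longrightarrow> emeasure (dirac_comb n w x) A =
             ennreal t * emeasure \<nu>1 A + ennreal (1 - t) * emeasure \<nu>2 A" by auto
      show "\<nu>1 = dirac_comb n w x"
      proof (rule key[OF cont inj wpos uniq wc n1 t0])
        fix A :: "'a set" assume A: "A \<in> sets borel"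
        show "ennreal t * emeasure \<nu>1 A \<le> emeasure (dirac_comb n w x) A"
          unfolding eq[OF A] by (intro add_increasing2) auto
      qed
      show "\<nu>2 = dirac_comb n w x"
      proof (rule key[OF cont inj wpos uniq wc n2])
        show "0 < 1 - t" using t1 by simp
        fix A :: "'a set" assume A: "A \<in> sets borel"
        show "ennreal (1 - t) * emeasure \<nu>2 A \<le> emeasure (dirac_comb n w x) A"
          unfolding eq[OF A] by (intro add_increasing) auto
      qed
    qed
  qed
qed


end
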